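(* Let $\nu\in(0,1]$ and $\delta\in(0,1]$. Then $$M_{\delta,\nu}\stackrel{d}{=} Z_{\nu,1}^{-1/\delta}\cdot M_{\delta},$$ where $Z_{\nu,1}$ and $M_\delta$ are independent.
   Context: $\stackrel{d}{=}$ denotes equality in distribution. For $\delta\in(0,1]$, $\nu>0$, $M_{\delta,\nu}$ denotes a nonnegative random variable with Laplace transform $(1+s^{\delta})^{-\nu}$, $s\ge0$, and $M_\delta=M_{\delta,1}$ (Mittag-Leffler distribution, Laplace transform $(1+s^\delta)^{-1}$). For $r\in(0,1)$, $Z_{r,1}=(G_{r,1}+G_{1-r,1})/G_{r,1}$ where $G_{r,1},G_{1-r,1}$ are independent gamma random variables with shapes $r,1-r$ and unit scale (density of $Z_{r,1}$: $\frac{1}{\Gamma(1-r)\Gamma(r)}\frac{\mathbf{1}(z\ge1)}{(z-1)^rz}$); $Z_{1,1}\equiv 1$. *)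

theory Defs
  imports "HOL-Probability.Probability"
begin

text \<open>The law of a nonnegative random variable with Laplace transform
  (1 + s^delta)^(-nu), s >= 0 (the law of M_{delta,nu}).
  Since Laplace transforms on s >= 0 determine laws of nonnegative random
  variables, this characterises the law uniquely.\<close>
definition ml_law :: "real \<Rightarrow> real \<Rightarrow> real measure \<Rightarrow> bool" where
  "ml_law \<delta> \<nu> \<mu> \<longleftrightarrow>
     prob_space \<mu> \<and> sets \<mu> = sets borel \<and> (AE x in \<mu>. 0 \<le> x) \<and>
     (\<forall>s\<ge>0. (\<integral>x. exp (- (s * x)) \<partial>\<mu>) = (1 + s powr \<delta>) powr (- \<nu>))"

definition Z_law :: "real \<Rightarrow> real measure" where
  "Z_law r = (if r = 1 then return borel 1
     else density lborel (\<lambda>z. ennreal (indicator {1..} z /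
            (Gamma (1 - r) * Gamma r * (z - 1) powr r * z))))"

end

theory Submission
  imports Defs
begin
lemma beta_sub:
  fixes \<nu> t :: real
  assumes "0 < \<nu>" "\<nu> < 1" "0 \<le> t"
  shows "((\<lambda>z. (z - 1) powr (- \<nu>) / (z + t)) has_integral
          ((1 + t) powr (- \<nu>) * Beta \<nu> (1 - \<nu>))) {1<..}"
proof -
  define c where "c = 1 + t"
  have c: "c > 0" "c \<ge> 1" using assms by (auto simp: c_def)
  define g where "g u = c / u - t" for u :: real
  define g' where "g' u = - c / u^2" for u :: real
  define f where "f z = (z - 1) powr (- \<nu>) / (z + t)" for z :: real
  define B where "B = (\<lambda>u::real. u powr (\<nu> - 1) * (1 - u) powr ((1 - \<nu>) - 1))"
  have Bint: "(B has_integral Beta \<nu> (1 - \<nu>)) {0<..<1}"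
    using has_integral_Beta_real[of \<nu> "1 - \<nu>"] assms
    by (simp add: has_integral_Icc_iff_Ioo B_def)
  have Bint2: "((\<lambda>u. c powr (- \<nu>) * B u) has_integral c powr (- \<nu>) * Beta \<nu> (1 - \<nu>)) {0<..<1}"
    using has_integral_mult_right[OF Bint] by simp
  have eq: "\<bar>g' u\<bar> * f (g u) = c powr (- \<nu>) * B u" if u: "u \<in> {0<..<1}" for u
  proof -
    from u have u0: "u > 0" "u < 1" by auto
    have g1: "g u - 1 = c * (1 - u) / u" using u0 c by (simp add: g_def c_def field_simps)
    have gt: "g u + t = c / u" by (simp add: g_def)
    have "(g u - 1) powr (- \<nu>) = c powr (- \<nu>) * (1 - u) powr (- \<nu>) / u powr (- \<nu>)"
      unfolding g1 using u0 c by (simp add: powr_divide powr_mult)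
    also have "\<dots> = c powr (- \<nu>) * (1 - u) powr (- \<nu>) * u powr \<nu>"
      using u0 by (simp add: powr_minus field_simps)
    finally have p: "(g u - 1) powr (- \<nu>) = c powr (- \<nu>) * (1 - u) powr (- \<nu>) * u powr \<nu>" .
    have up: "u powr (\<nu> - 1) = u powr \<nu> / u" using u0 by (simp add: powr_diff)
    show ?thesis
      unfolding f_def p gt B_def g'_def up using u0 c
      by (simp add: field_simps power2_eq_square abs_div)
  qed
  have img: "g ` {0<..<1} = {1<..}"
  proof
    show "g ` {0<..<1} \<subseteq> {1<..}"
    proof
      fix z assume "z \<in> g ` {0<..<1}"
      then obtain u where u: "0 < u" "u < 1" "z = g u" by auto
      have "c / u > c" using u c by (simp add: field_simps)
      thus "z \<in> {1<..}" using u by (simp add: g_def c_def)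
    qed
    show "{1<..} \<subseteq> g ` {0<..<1}"
    proof
      fix z :: real assume z: "z \<in> {1<..}"
      define u where "u = c / (z + t)"
      have zt: "z + t > c" using z by (simp add: c_def)
      have "u \<in> {0<..<1}" using zt c by (auto simp: u_def field_simps)
      moreover have "g u = z" using zt c by (simp add: g_def u_def)
      ultimately show "z \<in> g ` {0<..<1}" by force
    qed
  qed
  have der: "(g has_field_derivative g' u) (at u within {0<..<1})" if "u \<in> {0<..<1}" for u
    using that unfolding g_def g'_def
    by (auto intro!: derivative_eq_intros simp: power2_eq_square field_simps)
  have inj: "inj_on g {0<..<1}"
    by (auto simp: inj_on_def g_def c(1)[THEN less_imp_neq, symmetric] field_simps) 
  have absB: "(\<lambda>u. c powr (- \<nu>) * B u) absolutely_integrable_on {0<..<1}"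
    apply (rule nonnegative_absolutely_integrable_1)
    using Bint2 by (auto simp: B_def)
  have "(\<lambda>u. \<bar>g' u\<bar> * f (g u)) absolutely_integrable_on {0<..<1} \<and>
        integral {0<..<1} (\<lambda>u. \<bar>g' u\<bar> * f (g u)) = c powr (- \<nu>) * Beta \<nu> (1 - \<nu>)"
  proof
    show "(\<lambda>u. \<bar>g' u\<bar> * f (g u)) absolutely_integrable_on {0<..<1}"
      by (rule absolutely_integrable_spike[OF absB negligible_empty]) (simp add: eq)
    have "integral {0<..<1} (\<lambda>u. \<bar>g' u\<bar> * f (g u)) = integral {0<..<1} (\<lambda>u. c powr (- \<nu>) * B u)"
      by (rule integral_cong) (simp add: eq)
    also have "\<dots> = c powr (- \<nu>) * Beta \<nu> (1 - \<nu>)" by (rule integral_unique[OF Bint2])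
    finally show "integral {0<..<1} (\<lambda>u. \<bar>g' u\<bar> * f (g u)) = c powr (- \<nu>) * Beta \<nu> (1 - \<nu>)" .
  qed
  note L = this
  have "f absolutely_integrable_on g ` {0<..<1} \<and> integral (g ` {0<..<1}) f = c powr (- \<nu>) * Beta \<nu> (1 - \<nu>)"
    apply (rule has_absolute_integral_change_of_variables_1'[THEN iffD1])
       apply simp
      apply (erule der)
     apply (rule inj)
    apply (rule L)
    done
  hence "f absolutely_integrable_on {1<..} \<and> integral {1<..} f = c powr (- \<nu>) * Beta \<nu> (1 - \<nu>)"
    by (simp add: img)
  hence "(f has_integral c powr (- \<nu>) * Beta \<nu> (1 - \<nu>)) {1<..}"
    using set_lebesgue_integral_eq_integral(1)[of "{1<..}" f] absolutely_integrable_on_def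
    by (metis has_integral_integrable_integral)
  thus ?thesis unfolding f_def c_def .
qed
lemma h1_eq:
  fixes s z \<delta> :: real
  assumes "0 \<le> s" "0 < \<delta>" "0 < z"
  shows "(1 + (s * z powr (- 1 / \<delta>)) powr \<delta>) powr (- 1) = z / (z + s powr \<delta>)"
proof -
  have "(s * z powr (- 1 / \<delta>)) powr \<delta> = s powr \<delta> * (z powr (- 1 / \<delta>)) powr \<delta>"
    using assms by (simp add: powr_mult)
  also have "(z powr (- 1 / \<delta>)) powr \<delta> = z powr (- 1)"
    using assms by (simp add: powr_powr)
  also have "z powr (- 1) = 1 / z" using assms by (simp add: powr_neg_one)
  finally have e: "(s * z powr (- 1 / \<delta>)) powr \<delta> = s powr \<delta> / z" by simp
  have pos: "1 + s powr \<delta> / z > 0" using assms by (simp add: add_pos_nonneg)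
  show ?thesis unfolding e using pos assms by (simp add: powr_neg_one field_simps)
qed

lemma Z_laplace:
  fixes \<nu> s \<delta> :: real
  assumes "0 < \<nu>" "\<nu> \<le> 1" "0 \<le> s" "0 < \<delta>"
  shows "(\<integral>\<^sup>+z. ennreal ((1 + (s * z powr (- 1 / \<delta>)) powr \<delta>) powr (- 1)) \<partial>Z_law \<nu>)
         = ennreal ((1 + s powr \<delta>) powr (- \<nu>))"
proof (cases "\<nu> = 1")
  case True
  have "(\<integral>\<^sup>+z. ennreal ((1 + (s * z powr (- 1 / \<delta>)) powr \<delta>) powr (- 1)) \<partial>return borel 1)
     = ennreal ((1 + (s * 1 powr (- 1 / \<delta>)) powr \<delta>) powr (- 1))"
    by (rule nn_integral_return) auto
  thus ?thesis using True unfolding Z_law_def by simp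
next
  case False
  with assms have nu1: "\<nu> < 1" by simp
  define t where "t = s powr \<delta>"
  have t0: "t \<ge> 0" by (simp add: t_def)
  define C where "C = Gamma (1 - \<nu>) * Gamma \<nu>"
  have C0: "C > 0" using assms nu1 by (simp add: C_def)
  have CB: "Beta \<nu> (1 - \<nu>) = C" by (simp add: Beta_def C_def)
  define F where "F z = (z - 1) powr (- \<nu>) / (z + t) / C" for z :: real
  have Fint: "(F has_integral (1 + t) powr (- \<nu>)) {1<..}"
  proof -
    have "((\<lambda>z. (z - 1) powr (- \<nu>) / (z + t) / C) has_integral
          ((1 + t) powr (- \<nu>) * Beta \<nu> (1 - \<nu>)) / C) {1<..}"
      by (rule has_integral_divide[OF beta_sub]) (use assms nu1 t0 in auto)
    thus ?thesis using C0 by (simp add: F_def[abs_def] CB)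
  qed
  have Fnn: "0 \<le> F z" if "z \<in> {1<..}" for z
    using that t0 C0 by (simp add: F_def)
  have pw: "ennreal (indicator {1..} z / (Gamma (1 - \<nu>) * Gamma \<nu> * (z - 1) powr \<nu> * z)) *
            ennreal ((1 + (s * z powr (- 1 / \<delta>)) powr \<delta>) powr (- 1))
          = ennreal (F z) * indicator {1<..} z" for z :: real
  proof (cases "z > 1")
    case True
    have h: "(1 + (s * z powr (- 1 / \<delta>)) powr \<delta>) powr (- 1) = z / (z + t)"
      unfolding t_def using True assms by (intro h1_eq) auto
    have "indicator {1..} z / (Gamma (1 - \<nu>) * Gamma \<nu> * (z - 1) powr \<nu> * z) * (z / (z + t)) = F z"
    proof -
      have pp: "(z - 1) powr \<nu> > 0" using True by simp
      have zt: "z + t > 0" using True t0 by simp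
      show ?thesis
        unfolding C_def[symmetric] F_def using True pp zt C0
        by (simp add: powr_minus divide_simps)
    qed
    moreover have "0 \<le> indicator {1..} z / (Gamma (1 - \<nu>) * Gamma \<nu> * (z - 1) powr \<nu> * z)"
      using True C0 by (simp add: C_def[symmetric])
    ultimately show ?thesis using True h
      by (simp add: ennreal_mult'[symmetric] indicator_def)
  next
    case False
    hence "indicator {1..} z / (Gamma (1 - \<nu>) * Gamma \<nu> * (z - 1) powr \<nu> * z) = 0"
      by (cases "z = 1") (auto simp: indicator_def)
    thus ?thesis using False by (simp add: indicator_def)
  qed
  have "(\<integral>\<^sup>+z. ennreal ((1 + (s * z powr (- 1 / \<delta>)) powr \<delta>) powr (- 1)) \<partial>Z_law \<nu>)
      = (\<integral>\<^sup>+z. ennreal (F z) * indicator {1<..} z \<partial>lborel)"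
  proof -
    have Zd: "Z_law \<nu> = density lborel (\<lambda>z. ennreal (indicator {1..} z / (Gamma (1 - \<nu>) * Gamma \<nu> * (z - 1) powr \<nu> * z)))"
      using False by (simp add: Z_law_def)
    show ?thesis unfolding Zd
      apply (subst nn_integral_density)
        apply measurable
      apply (rule nn_integral_cong)
      apply (rule pw)
      done
  qed
  also have "\<dots> = ennreal ((1 + t) powr (- \<nu>))"
    by (rule nn_integral_has_integral_lebesgue'[OF Fnn Fint])
  finally show ?thesis by (simp add: t_def)
qed

theorem theorem4:
  fixes \<nu> \<delta> :: real and P :: "'a measure" and Z X :: "'a \<Rightarrow> real"
  assumes "prob_space P"
    and "0 < \<nu>" "\<nu> \<le> 1" "0 < \<delta>" "\<delta> \<le> 1"
    and "Z \<in> borel_measurable P" "X \<in> borel_measurable P"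
    and "prob_space.indep_var P borel Z borel X"
    and "distr P borel Z = Z_law \<nu>"
    and "ml_law \<delta> 1 (distr P borel X)"
  shows "ml_law \<delta> \<nu> (distr P borel (\<lambda>\<omega>. Z \<omega> powr (- 1 / \<delta>) * X \<omega>))"
proof -
  interpret P: prob_space P by fact
  note Zm[measurable] = assms(6) and Xm[measurable] = assms(7)
  define W where "W \<omega> = Z \<omega> powr (- 1 / \<delta>) * X \<omega>" for \<omega>
  have Wm[measurable]: "W \<in> borel_measurable P" unfolding W_def by measurable
  have pX: "prob_space (distr P borel X)" by (rule P.prob_space_distr) simp
  interpret X: prob_space "distr P borel X" by (rule pX)
  have pZ: "prob_space (distr P borel Z)" by (rule P.prob_space_distr) simp
  interpret Z: prob_space "distr P borel Z" by (rule pZ)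
  interpret ZX: pair_sigma_finite "distr P borel Z" "distr P borel X"
    by unfold_locales
  from assms(10) have Xnn: "AE x in distr P borel X. 0 \<le> x"
    and Xlap: "\<And>r. r \<ge> 0 \<Longrightarrow> (\<integral>x. exp (- (r * x)) \<partial>distr P borel X) = (1 + r powr \<delta>) powr (- 1)"
    unfolding ml_law_def by auto
  have XnnP: "AE \<omega> in P. 0 \<le> X \<omega>"
    using Xnn by (subst (asm) AE_distr_iff) auto
  have inner: "(\<integral>\<^sup>+x. ennreal (exp (- (r * x))) \<partial>distr P borel X) = ennreal ((1 + r powr \<delta>) powr (- 1))"
    if r: "r \<ge> 0" for r
  proof -
    have int: "integrable (distr P borel X) (\<lambda>x. exp (- (r * x)))"
    proof (rule X.integrable_const_bound[where B=1])
      show "AE x in distr P borel X. norm (exp (- (r * x))) \<le> 1"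
        using Xnn by eventually_elim (use r in simp)
    qed simp
    have "(\<integral>\<^sup>+x. ennreal (exp (- (r * x))) \<partial>distr P borel X) = ennreal (\<integral>x. exp (- (r * x)) \<partial>distr P borel X)"
      by (rule nn_integral_eq_integral[OF int]) simp
    thus ?thesis using Xlap[OF r] by simp
  qed
  have indep: "distr P borel Z \<Otimes>\<^sub>M distr P borel X = distr P (borel \<Otimes>\<^sub>M borel) (\<lambda>x. (Z x, X x))"
    using assms(8) P.indep_var_distribution_eq by blast
  have lap: "(\<integral>x. exp (- (s * x)) \<partial>distr P borel W) = (1 + s powr \<delta>) powr (- \<nu>)" if s: "s \<ge> 0" for s
  proof -
    have "(\<integral>\<^sup>+x. ennreal (exp (- (s * x))) \<partial>distr P borel W)
        = (\<integral>\<^sup>+\<omega>. ennreal (exp (- (s * W \<omega>))) \<partial>P)"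
      by (rule nn_integral_distr) auto
    also have "\<dots> = (\<integral>\<^sup>+\<omega>. (\<lambda>(z, x). ennreal (exp (- ((s * z powr (- 1 / \<delta>)) * x)))) (Z \<omega>, X \<omega>) \<partial>P)"
      by (simp add: W_def mult.assoc)
    also have "\<dots> = (\<integral>\<^sup>+p. (\<lambda>(z, x). ennreal (exp (- ((s * z powr (- 1 / \<delta>)) * x)))) p
                      \<partial>distr P (borel \<Otimes>\<^sub>M borel) (\<lambda>x. (Z x, X x)))"
      by (rule nn_integral_distr[symmetric]) auto
    also have "\<dots> = (\<integral>\<^sup>+p. (\<lambda>(z, x). ennreal (exp (- ((s * z powr (- 1 / \<delta>)) * x)))) p
                      \<partial>(distr P borel Z \<Otimes>\<^sub>M distr P borel X))"
      by (simp only: indep)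
    also have "\<dots> = (\<integral>\<^sup>+z. \<integral>\<^sup>+x. ennreal (exp (- ((s * z powr (- 1 / \<delta>)) * x))) \<partial>distr P borel X \<partial>distr P borel Z)"
    proof -
      have m: "(\<lambda>(z, x). ennreal (exp (- ((s * z powr (- 1 / \<delta>)) * x)))) \<in> borel_measurable (distr P borel Z \<Otimes>\<^sub>M distr P borel X)"
        by measurable
      show ?thesis by (subst X.nn_integral_fst[OF m, symmetric]) simp
    qed
    also have "\<dots> = (\<integral>\<^sup>+z. ennreal ((1 + (s * z powr (- 1 / \<delta>)) powr \<delta>) powr (- 1)) \<partial>distr P borel Z)"
      by (rule nn_integral_cong) (rule inner, use s in simp)
    also have "\<dots> = ennreal ((1 + s powr \<delta>) powr (- \<nu>))"
      unfolding assms(9) by (rule Z_laplace) (use assms s in auto)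
    finally have e: "(\<integral>\<^sup>+x. ennreal (exp (- (s * x))) \<partial>distr P borel W) = ennreal ((1 + s powr \<delta>) powr (- \<nu>))" .
    have "(\<integral>x. exp (- (s * x)) \<partial>distr P borel W) = enn2real (\<integral>\<^sup>+x. ennreal (exp (- (s * x))) \<partial>distr P borel W)"
      by (rule integral_eq_nn_integral) auto
    thus ?thesis using e by simp
  qed
  have AEW: "AE x in distr P borel W. 0 \<le> x"
    apply (subst AE_distr_iff)
      apply simp
     apply simp
    using XnnP by eventually_elim (simp add: W_def)
  show ?thesis
    unfolding ml_law_def W_def[symmetric]
    using P.prob_space_distr[OF Wm] AEW lap by auto
qed

end
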